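(* The sequence $0\to M\to\mathbb{Z}(Q)\xrightarrow{\pi_1}\operatorname{Wt}(Q)\to0$ is exact, where $\pi_2$ restricts to an isomorphism from $\ker(\pi_1)$ onto the image of $M$ in $\mathbb{Z}^d$, and there is a commutative diagram of abelian groups \[ \begin{array}{ccccccccc}0&\to&M&\to&\mathbb{Z}(Q)&\xrightarrow{\pi_1}&\operatorname{Wt}(Q)&\to&0\\ &&\|&&\downarrow{\scriptstyle\pi_2}&&\downarrow{\scriptstyle\nu}&&\\ 0&\to&M&\to&\mathbb{Z}^d&\xrightarrow{\deg}&\operatorname{Cl}(X)&\to&0\end{array} \] with exact rows. Moreover $\pi_2$ identifies the subsemigroup $\mathbb{N}(Q)\cap\ker(\pi_1)$ with $\sigma^\vee\cap M=\mathbb{N}^d\cap\ker(\deg)$. In particular, the rank of $\mathbb{Z}(Q)$ is $n+r$.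
   Context: Let $\mathbb{k}$ be an algebraically closed field and $X=\operatorname{Spec}R$ a normal affine toric variety of dimension $n$ with a torus-fixed point, $R=\mathbb{k}[\sigma^\vee\cap M]$, $\sigma\subset N\otimes\mathbb{R}$ strongly convex rational polyhedral, $N=M^\vee$. Let $\sigma(1)$ be the rays, $d=|\sigma(1)|$, $v_\rho$ primitive generators, $D_\rho$ toric prime divisors, torus-invariant divisors identified with $\mathbb{Z}^d$; exact sequence $0\to M\to\mathbb{Z}^d\xrightarrow{\deg}\operatorname{Cl}(X)\to0$, $u\mapsto\sum_\rho\langle u,v_\rho\rangle D_\rho$, $\deg D=[\mathcal{O}_X(D)]$. Cox ring $\mathbb{k}[x_\rho]$. Let $\mathscr{E}=(E_0=\mathcal{O}_X,E_1,\dots,E_r)$ be pairwise distinct rank one reflexive sheaves, $E_i=\mathcal{O}_X(D_i')$, and $Q$ its quiver of sections: vertices $0,\dots,r$; an arrow $a:i\to j$ with label $\operatorname{div}(a)\in\mathbb{N}^d$ for each irreducible $T_M$-invariant section $x^{\operatorname{div}(a)}$ of $\operatorname{Hom}(E_i,E_j)\cong H^0(\mathcal{O}_X(D_j'-D_i'))$ (irreducible: not in the image of multiplication through any $E_k$, $k\neq i,j$). $\operatorname{Wt}(Q)=\{\theta\in\mathbb{Z}^{Q_0}:\sum\theta_i=0\}$; $\pi:\mathbb{Z}^{Q_1}\to\operatorname{Wt}(Q)\oplus\mathbb{Z}^d$, $\chi_a\mapsto(\chi_{\mathsf{h}(a)}-\chi_{\mathsf{t}(a)},\operatorname{div}(a))$;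 $\mathbb{Z}(Q)=\pi(\mathbb{Z}^{Q_1})$, $\mathbb{N}(Q)=\pi(\mathbb{N}^{Q_1})$; $\pi_1,\pi_2$ the projections of $\mathbb{Z}(Q)$ to $\operatorname{Wt}(Q)$ and $\mathbb{Z}^d$; $\nu:\operatorname{Wt}(Q)\to\operatorname{Cl}(X)$, $\nu(\sum\theta_i\chi_i)=\sum\theta_i[E_i]$. *)

theory Defs
  imports Complex_Main "HOL-Library.Function_Algebras" "HOL-Library.Product_Plus"
begin

text \<open>Lattices: N = M = ('n => int) for a finite index type 'n (so n = CARD('n));
  rays indexed by a finite type 'r (so d = CARD('r)), v :: 'r => 'n => int.
  Vertices of the quiver are the naturals 0..r.\<close>

definition pairing :: "('n::finite \<Rightarrow> int) \<Rightarrow> ('n \<Rightarrow> int) \<Rightarrow> int" where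
  "pairing u w = (\<Sum>i\<in>UNIV. u i * w i)"

definition primitive :: "('n::finite \<Rightarrow> int) \<Rightarrow> bool" where
  "primitive w \<longleftrightarrow> (\<forall>k::int. (\<forall>i. k dvd w i) \<longrightarrow> k dvd 1)"

definition cone_of :: "('r::finite \<Rightarrow> 'n::finite \<Rightarrow> int) \<Rightarrow> 'r set \<Rightarrow> ('n \<Rightarrow> real) set" where
  "cone_of v A = {x. \<exists>c::'r \<Rightarrow> real. (\<forall>\<rho>. 0 \<le> c \<rho>) \<and>
                      x = (\<lambda>i. \<Sum>\<rho>\<in>A. c \<rho> * real_of_int (v \<rho> i))}"

definition sigma :: "('r::finite \<Rightarrow> 'n::finite \<Rightarrow> int) \<Rightarrow> ('n \<Rightarrow> real) set" where
  "sigma v = cone_of v UNIV"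

definition dual_cone_M :: "('r::finite \<Rightarrow> 'n::finite \<Rightarrow> int) \<Rightarrow> ('n \<Rightarrow> int) set" where
  "dual_cone_M v = {u. \<forall>x\<in>sigma v. 0 \<le> (\<Sum>i\<in>UNIV. real_of_int (u i) * x i)}"

definition divmap :: "('r::finite \<Rightarrow> 'n::finite \<Rightarrow> int) \<Rightarrow> ('n \<Rightarrow> int) \<Rightarrow> ('r \<Rightarrow> int)" where
  "divmap v u = (\<lambda>\<rho>. pairing u (v \<rho>))"

text \<open>Cl(X) = Z^d / M, a class being represented as the coset D + image(M).\<close>
definition deg :: "('r::finite \<Rightarrow> 'n::finite \<Rightarrow> int) \<Rightarrow> ('r \<Rightarrow> int) \<Rightarrow> ('r \<Rightarrow> int) set" where
  "deg v D = range (\<lambda>u. D + divmap v u)"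

definition Cl :: "('r::finite \<Rightarrow> 'n::finite \<Rightarrow> int) \<Rightarrow> ('r \<Rightarrow> int) set set" where
  "Cl v = range (deg v)"

text \<open>Labels of T_M-invariant sections of Hom(E_i,E_j) = H^0(O_X(D_j' - D_i')):
  effective divisors D with deg D = [E_j] - [E_i].\<close>
definition sec :: "('r::finite \<Rightarrow> 'n::finite \<Rightarrow> int) \<Rightarrow> (nat \<Rightarrow> 'r \<Rightarrow> int)
                    \<Rightarrow> nat \<Rightarrow> nat \<Rightarrow> ('r \<Rightarrow> int) \<Rightarrow> bool" where
  "sec v Dp i j D \<longleftrightarrow> (\<forall>\<rho>. 0 \<le> D \<rho>) \<and> deg v D = deg v (Dp j - Dp i)"

definition irred :: "('r::finite \<Rightarrow> 'n::finite \<Rightarrow> int) \<Rightarrow> nat \<Rightarrow> (nat \<Rightarrow> 'r \<Rightarrow> int)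
                    \<Rightarrow> nat \<Rightarrow> nat \<Rightarrow> ('r \<Rightarrow> int) \<Rightarrow> bool" where
  "irred v r Dp i j D \<longleftrightarrow> sec v Dp i j D \<and>
     \<not> (\<exists>k\<le>r. k \<noteq> i \<and> k \<noteq> j \<and>
          (\<exists>D1 D2. sec v Dp i k D1 \<and> sec v Dp k j D2 \<and> D = D1 + D2))"

text \<open>Arrows of the quiver of sections, identified with (tail, head, label).\<close>
definition arrows :: "('r::finite \<Rightarrow> 'n::finite \<Rightarrow> int) \<Rightarrow> nat \<Rightarrow> (nat \<Rightarrow> 'r \<Rightarrow> int)
                    \<Rightarrow> (nat \<times> nat \<times> ('r \<Rightarrow> int)) set" where
  "arrows v r Dp = {(i, j, D). i \<le> r \<and> j \<le> r \<and> irred v r Dp i j D}"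

definition chi :: "nat \<Rightarrow> nat \<Rightarrow> int" where
  "chi i = (\<lambda>k. if k = i then 1 else 0)"

definition piQ :: "nat \<times> nat \<times> ('r \<Rightarrow> int) \<Rightarrow> (nat \<Rightarrow> int) \<times> ('r \<Rightarrow> int)" where
  "piQ a = (case a of (i, j, D) \<Rightarrow> (chi j - chi i, D))"

inductive_set zspan :: "'a::ab_group_add set \<Rightarrow> 'a set" for S where
  zspan_zero: "0 \<in> zspan S"
| zspan_gen: "x \<in> S \<Longrightarrow> x \<in> zspan S"
| zspan_add: "x \<in> zspan S \<Longrightarrow> y \<in> zspan S \<Longrightarrow> x + y \<in> zspan S"
| zspan_neg: "x \<in> zspan S \<Longrightarrow> - x \<in> zspan S"

inductive_set nspan :: "'a::comm_monoid_add set \<Rightarrow> 'a set" for S where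
  nspan_zero: "0 \<in> nspan S"
| nspan_gen: "x \<in> S \<Longrightarrow> x \<in> nspan S"
| nspan_add: "x \<in> nspan S \<Longrightarrow> y \<in> nspan S \<Longrightarrow> x + y \<in> nspan S"

definition ZQ :: "('r::finite \<Rightarrow> 'n::finite \<Rightarrow> int) \<Rightarrow> nat \<Rightarrow> (nat \<Rightarrow> 'r \<Rightarrow> int)
                    \<Rightarrow> ((nat \<Rightarrow> int) \<times> ('r \<Rightarrow> int)) set" where
  "ZQ v r Dp = zspan (piQ ` arrows v r Dp)"

definition NQ :: "('r::finite \<Rightarrow> 'n::finite \<Rightarrow> int) \<Rightarrow> nat \<Rightarrow> (nat \<Rightarrow> 'r \<Rightarrow> int)
                    \<Rightarrow> ((nat \<Rightarrow> int) \<times> ('r \<Rightarrow> int)) set" where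
  "NQ v r Dp = nspan (piQ ` arrows v r Dp)"

definition Wt :: "nat \<Rightarrow> (nat \<Rightarrow> int) set" where
  "Wt r = {\<theta>. (\<forall>k>r. \<theta> k = 0) \<and> (\<Sum>k\<le>r. \<theta> k) = 0}"

text \<open>nu(sum theta_i chi_i) = sum theta_i [E_i] = deg(sum theta_i D_i').\<close>
definition nu :: "('r::finite \<Rightarrow> 'n::finite \<Rightarrow> int) \<Rightarrow> nat \<Rightarrow> (nat \<Rightarrow> 'r \<Rightarrow> int)
                    \<Rightarrow> (nat \<Rightarrow> int) \<Rightarrow> ('r \<Rightarrow> int) set" where
  "nu v r Dp \<theta> = deg v (\<lambda>\<rho>. \<Sum>i\<le>r. \<theta> i * Dp i \<rho>)"

definition zsmult :: "int \<Rightarrow> ('a \<Rightarrow> int) \<times> ('b \<Rightarrow> int) \<Rightarrow> ('a \<Rightarrow> int) \<times> ('b \<Rightarrow> int)" where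
  "zsmult k x = ((\<lambda>i. k * fst x i), (\<lambda>j. k * snd x j))"

definition zindep :: "(('a \<Rightarrow> int) \<times> ('b \<Rightarrow> int)) set \<Rightarrow> bool" where
  "zindep S \<longleftrightarrow> finite S \<and>
     (\<forall>c. (\<Sum>s\<in>S. zsmult (c s) s) = 0 \<longrightarrow> (\<forall>s\<in>S. c s = 0))"

definition zrank :: "(('a \<Rightarrow> int) \<times> ('b \<Rightarrow> int)) set \<Rightarrow> nat" where
  "zrank G = Max {card S | S. S \<subseteq> G \<and> zindep S}"

end

theory Submission
  imports Defs "HOL-Analysis.Convex_Euclidean_Space" "HOL-Analysis.Cartesian_Space"
begin


lemma sum_ind:
  assumes "finite A"
  shows "(\<Sum>x\<in>A. (if x = a then c else 0) * (f x::real)) = (if a \<in> A then c * f a else 0)"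
proof -
  have "(\<Sum>x\<in>A. (if x = a then c else 0) * (f x::real)) = (\<Sum>x\<in>A. if x = a then c * f a else 0)"
    by (rule sum.cong) auto
  thus ?thesis using assms by simp
qed

lemma interior_point:
  fixes v :: "'r::finite \<Rightarrow> 'n::finite \<Rightarrow> int"
  assumes rays: "\<forall>\<rho>. (\<lambda>i. real_of_int (v \<rho> i)) \<notin> cone_of v (UNIV - {\<rho>})"
    and strongly_convex: "\<forall>x\<in>sigma v. - x \<in> sigma v \<longrightarrow> x = 0"
  shows "\<exists>u. \<forall>\<rho>. pairing u (v \<rho>) > 0"
proof -
  define V where "V \<rho> = (\<chi> i. real_of_int (v \<rho> i) :: real^'n)" for \<rho>
  have injV: "inj V"
  proof
    fix \<rho> \<rho>' assume eq: "V \<rho> = V \<rho>'"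
    show "\<rho> = \<rho>'"
    proof (rule ccontr)
      assume ne: "\<rho> \<noteq> \<rho>'"
      have e: "(\<lambda>i. real_of_int (v \<rho> i)) = (\<lambda>i. real_of_int (v \<rho>' i))"
        using eq by (auto simp: V_def vec_eq_iff)
      have "(\<lambda>i. real_of_int (v \<rho>' i)) \<in> cone_of v (UNIV - {\<rho>})"
        unfolding cone_of_def
        apply (rule CollectI, rule exI[of _ "\<lambda>x. if x = \<rho>' then 1 else 0"])
        using ne by (auto simp: sum_ind)
      with rays[rule_format, of \<rho>] e show False by simp
    qed
  qed
  have notin: "0 \<notin> convex hull (range V)"
  proof
    assume "0 \<in> convex hull (range V)"
    then obtain w where w0: "\<forall>x\<in>range V. 0 \<le> w x" and w1: "sum w (range V) = 1"
      and ws: "(\<Sum>x\<in>range V. w x *\<^sub>R x) = 0"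
      using convex_hull_finite[of "range V"] by auto
    define c where "c \<rho> = w (V \<rho>)" for \<rho>
    have c0: "\<forall>\<rho>. 0 \<le> c \<rho>" using w0 by (auto simp: c_def)
    have c1: "sum c UNIV = 1" using w1 sum.reindex[OF injV, of w] by (simp add: c_def)
    have cs: "(\<Sum>\<rho>\<in>UNIV. c \<rho> *\<^sub>R V \<rho>) = 0"
      using ws sum.reindex[OF injV, of "\<lambda>x. w x *\<^sub>R x"] by (simp add: c_def)
    have csi: "(\<Sum>\<rho>\<in>UNIV. c \<rho> * real_of_int (v \<rho> i)) = 0" for i
    proof -
      have "(\<Sum>\<rho>\<in>UNIV. c \<rho> *\<^sub>R V \<rho>) $ i = 0" using cs by simp
      thus ?thesis by (simp add: V_def sum_component)
    qed
    obtain \<rho>0 where p0: "c \<rho>0 > 0"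
    proof (rule ccontr)
      assume "\<not> thesis"
      hence "\<forall>\<rho>. c \<rho> \<le> 0" using that by (meson not_le)
      hence "sum c UNIV \<le> 0" by (simp add: sum_nonpos)
      with c1 show False by simp
    qed
    define x where "x = (\<lambda>i. c \<rho>0 * real_of_int (v \<rho>0 i))"
    have xs: "x \<in> sigma v"
      unfolding sigma_def cone_of_def x_def
      apply (rule CollectI, rule exI[of _ "\<lambda>\<rho>. if \<rho> = \<rho>0 then c \<rho>0 else 0"])
      using c0 by (auto simp: sum_ind)
    have mxs: "- x \<in> sigma v"
      unfolding sigma_def cone_of_def
    proof (rule CollectI, rule exI[of _ "\<lambda>\<rho>. if \<rho> = \<rho>0 then 0 else c \<rho>"], intro conjI)
      show "\<forall>\<rho>. 0 \<le> (if \<rho> = \<rho>0 then 0 else c \<rho>)" using c0 by auto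
      show "- x = (\<lambda>i. \<Sum>\<rho>\<in>UNIV. (if \<rho> = \<rho>0 then 0 else c \<rho>) * real_of_int (v \<rho> i))"
      proof
        fix i
        have "(\<Sum>\<rho>\<in>UNIV. (if \<rho> = \<rho>0 then 0 else c \<rho>) * real_of_int (v \<rho> i))
            = (\<Sum>\<rho>\<in>UNIV. c \<rho> * real_of_int (v \<rho> i)) - c \<rho>0 * real_of_int (v \<rho>0 i)"
        proof -
          have "(\<Sum>\<rho>\<in>UNIV. c \<rho> * real_of_int (v \<rho> i)) = 
            (\<Sum>\<rho>\<in>UNIV. (if \<rho> = \<rho>0 then 0 else c \<rho>) * real_of_int (v \<rho> i)) + 
            (\<Sum>\<rho>\<in>UNIV. (if \<rho> = \<rho>0 then c \<rho>0 else 0) * real_of_int (v \<rho> i))"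
            by (subst sum.distrib[symmetric]) (rule sum.cong, auto)
          thus ?thesis by (simp add: sum_ind)
        qed
        thus "(- x) i = (\<Sum>\<rho>\<in>UNIV. (if \<rho> = \<rho>0 then 0 else c \<rho>) * real_of_int (v \<rho> i))"
          using csi[of i] by (simp add: x_def)
      qed
    qed
    have "x = 0" using strongly_convex xs mxs by auto
    hence "\<forall>i. real_of_int (v \<rho>0 i) = 0" using p0 by (auto simp: x_def fun_eq_iff)
    hence "(\<lambda>i. real_of_int (v \<rho>0 i)) \<in> cone_of v (UNIV - {\<rho>0})"
      unfolding cone_of_def by (auto intro!: exI[of _ "\<lambda>_. 0"])
    with rays show False by auto
  qed
  obtain a b where b0: "0 < b" and ab: "\<forall>x\<in>convex hull (range V). inner a x > b"
    using separating_hyperplane_closed_0[OF convex_convex_hull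
        compact_imp_closed[OF finite_imp_compact_convex_hull] notin] by auto
  have ab': "(\<Sum>i\<in>UNIV. a $ i * real_of_int (v \<rho> i)) > b" for \<rho>
    using ab hull_inc[of "V \<rho>" "range V" convex] by (auto simp: inner_vec_def V_def)
  define B where "B = 1 + (\<Sum>\<rho>\<in>UNIV. \<Sum>i\<in>UNIV. \<bar>real_of_int (v \<rho> i)\<bar>)"
  define N where "N = B / b"
  define u where "u i = \<lfloor>N * a $ i\<rfloor>" for i
  have "pairing u (v \<rho>) > 0" for \<rho>
  proof -
    have "(\<Sum>i\<in>UNIV. \<bar>real_of_int (v \<rho> i)\<bar>) \<le> (\<Sum>\<rho>\<in>UNIV. \<Sum>i\<in>UNIV. \<bar>real_of_int (v \<rho> i)\<bar>)"
      by (rule member_le_sum[where f = "\<lambda>\<rho>. \<Sum>i\<in>UNIV. \<bar>real_of_int (v \<rho> i)\<bar>"])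
         (auto intro: sum_nonneg)
    hence Bl: "(\<Sum>i\<in>UNIV. \<bar>real_of_int (v \<rho> i)\<bar>) < B" by (simp add: B_def)
    have "B = N * b" using b0 by (simp add: N_def)
    also have "\<dots> < N * (\<Sum>i\<in>UNIV. a $ i * real_of_int (v \<rho> i))"
    proof -
      have "B > 0" unfolding B_def by (smt (verit) sum_nonneg abs_ge_zero)
      hence "N > 0" using b0 by (simp add: N_def)
      thus ?thesis using ab'[of \<rho>] by simp
    qed
    also have "\<dots> = (\<Sum>i\<in>UNIV. (N * a $ i) * real_of_int (v \<rho> i))"
      by (simp add: sum_distrib_left mult.assoc)
    finally have 1: "B < (\<Sum>i\<in>UNIV. (N * a $ i) * real_of_int (v \<rho> i))" .
    have 2: "(N * a $ i) * real_of_int (v \<rho> i) \<le> real_of_int (u i) * real_of_int (v \<rho> i) + \<bar>real_of_int (v \<rho> i)\<bar>" for i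
    proof -
      have f1: "real_of_int (u i) \<le> N * a $ i" "N * a $ i < real_of_int (u i) + 1"
        unfolding u_def by linarith+
      have "(N * a $ i - real_of_int (u i)) * real_of_int (v \<rho> i) \<le> \<bar>real_of_int (v \<rho> i)\<bar>"
      proof -
        have "\<bar>N * a $ i - real_of_int (u i)\<bar> \<le> 1" using f1 by linarith
        hence "\<bar>(N * a $ i - real_of_int (u i)) * real_of_int (v \<rho> i)\<bar> \<le> \<bar>real_of_int (v \<rho> i)\<bar>"
          by (simp add: abs_mult mult_left_le_one_le)
        thus ?thesis by linarith
      qed
      thus ?thesis by (simp add: algebra_simps)
    qed
    have "(\<Sum>i\<in>UNIV. (N * a $ i) * real_of_int (v \<rho> i)) \<le>
          (\<Sum>i\<in>UNIV. real_of_int (u i) * real_of_int (v \<rho> i)) + (\<Sum>i\<in>UNIV. \<bar>real_of_int (v \<rho> i)\<bar>)"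
      by (subst sum.distrib[symmetric]) (rule sum_mono, rule 2)
    with 1 Bl have "0 < (\<Sum>i\<in>UNIV. real_of_int (u i) * real_of_int (v \<rho> i))" by linarith
    moreover have "real_of_int (\<Sum>i\<in>UNIV. u i * v \<rho> i) = (\<Sum>i\<in>UNIV. real_of_int (u i) * real_of_int (v \<rho> i))" by simp
    ultimately have "0 < real_of_int (\<Sum>i\<in>UNIV. u i * v \<rho> i)" by linarith
    hence "0 < (\<Sum>i\<in>UNIV. u i * v \<rho> i)" by (simp only: of_int_0_less_iff)
    thus ?thesis by (simp add: pairing_def)
  qed
  thus ?thesis by blast
qed



lemma sum_fun_app: "(\<Sum>x\<in>A. f x) y = (\<Sum>x\<in>A. f x y)"
  by (induct A rule: infinite_finite_induct) auto

lemma pairing_add: "pairing (a + b) w = pairing a w + pairing b w"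
  by (simp add: pairing_def sum.distrib distrib_right)

lemma pairing_uminus: "pairing (- a) w = - pairing a w"
  by (simp add: pairing_def sum_negf)

lemma pairing_zero: "pairing 0 w = 0"
  by (simp add: pairing_def)

lemma pairing_smult: "pairing (\<lambda>i. k * a i) w = k * pairing a w"
  by (simp add: pairing_def sum_distrib_left mult.assoc)

lemma divmap_add: "divmap v (a + b) = divmap v a + divmap v b"
  by (simp add: divmap_def fun_eq_iff pairing_add)
lemma divmap_uminus: "divmap v (- a) = - divmap v a"
  by (simp add: divmap_def fun_eq_iff pairing_uminus)
lemma divmap_diff: "divmap v (a - b) = divmap v a - divmap v b"
  using divmap_add[of v a "-b"] divmap_uminus[of v b] by simp
lemma divmap_zero: "divmap v 0 = 0"
  by (simp add: divmap_def fun_eq_iff pairing_zero)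
lemma divmap_smult: "divmap v (\<lambda>i. k * a i) = (\<lambda>\<rho>. k * divmap v a \<rho>)"
  by (simp add: divmap_def pairing_smult)

lemma deg_eq: "deg v A = deg v B \<longleftrightarrow> A - B \<in> range (divmap v)"
proof
  assume "deg v A = deg v B"
  moreover have "A \<in> deg v A" unfolding deg_def
    by (rule range_eqI[of _ _ 0]) (simp add: divmap_zero)
  ultimately have "A \<in> deg v B" by simp
  then obtain u where "A = B + divmap v u" by (auto simp: deg_def)
  thus "A - B \<in> range (divmap v)" by simp
next
  assume "A - B \<in> range (divmap v)"
  then obtain w where w: "A - B = divmap v w" by auto
  show "deg v A = deg v B"
  proof
    show "deg v A \<subseteq> deg v B"
    proof
      fix x assume "x \<in> deg v A"
      then obtain u where "x = A + divmap v u" by (auto simp: deg_def)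
      hence "x = B + divmap v (w + u)" using w by (simp add: divmap_add algebra_simps)
      thus "x \<in> deg v B" by (auto simp: deg_def)
    qed
    show "deg v B \<subseteq> deg v A"
    proof
      fix x assume "x \<in> deg v B"
      then obtain u where "x = B + divmap v u" by (auto simp: deg_def)
      hence "x = A + divmap v (u - w)" using w by (simp add: divmap_diff algebra_simps)
      thus "x \<in> deg v A" by (auto simp: deg_def)
    qed
  qed
qed

lemma range_divmap_add: "a \<in> range (divmap v) \<Longrightarrow> b \<in> range (divmap v) \<Longrightarrow> a + b \<in> range (divmap v)"
proof -
  assume "a \<in> range (divmap v)" "b \<in> range (divmap v)"
  then obtain x y where "a = divmap v x" "b = divmap v y" by auto
  hence "a + b = divmap v (x + y)" by (simp add: divmap_add)
  thus ?thesis by simp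
qed
lemma range_divmap_uminus: "a \<in> range (divmap v) \<Longrightarrow> - a \<in> range (divmap v)"
proof -
  assume "a \<in> range (divmap v)"
  then obtain x where "a = divmap v x" by auto
  hence "- a = divmap v (- x)" by (simp add: divmap_uminus)
  thus ?thesis by simp
qed

lemma pair_cone:
  "(\<Sum>i\<in>UNIV. real_of_int (u i) * (\<Sum>\<rho>\<in>A. c \<rho> * real_of_int (v \<rho> i)))
   = (\<Sum>\<rho>\<in>A. c \<rho> * real_of_int (pairing u (v \<rho>)))"
  by (simp add: pairing_def sum_distrib_left sum_distrib_right sum.swap[of _ A] mult_ac)

lemma v_in_sigma: "(\<lambda>i. real_of_int (v \<rho> i)) \<in> sigma v"
  unfolding sigma_def cone_of_def
proof (rule CollectI, rule exI[of _ "\<lambda>x. if x = \<rho> then 1 else 0"], intro conjI)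
  show "\<forall>x. 0 \<le> (if x = \<rho> then 1 else (0::real))" by simp
  show "(\<lambda>i. real_of_int (v \<rho> i)) = (\<lambda>i. \<Sum>x\<in>UNIV. (if x = \<rho> then 1 else 0) * real_of_int (v x i))"
  proof
    fix i
    have "(\<Sum>x\<in>UNIV. (if x = \<rho> then 1 else 0) * real_of_int (v x i)) = (\<Sum>x\<in>UNIV. if x = \<rho> then real_of_int (v \<rho> i) else 0)"
      by (rule sum.cong) auto
    thus "real_of_int (v \<rho> i) = (\<Sum>x\<in>UNIV. (if x = \<rho> then 1 else 0) * real_of_int (v x i))" by simp
  qed
qed

lemma dual_iff: "u \<in> dual_cone_M v \<longleftrightarrow> (\<forall>\<rho>. 0 \<le> pairing u (v \<rho>))"
proof
  assume u: "u \<in> dual_cone_M v"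
  show "\<forall>\<rho>. 0 \<le> pairing u (v \<rho>)"
  proof
    fix \<rho>
    have "\<forall>x\<in>sigma v. 0 \<le> (\<Sum>i\<in>UNIV. real_of_int (u i) * x i)"
      using u unfolding dual_cone_M_def by simp
    from this[rule_format, OF v_in_sigma[of v \<rho>]]
    have "0 \<le> (\<Sum>i\<in>UNIV. real_of_int (u i) * real_of_int (v \<rho> i))" .
    thus "0 \<le> pairing u (v \<rho>)" unfolding pairing_def
      by (metis (no_types, lifting) of_int_0_le_iff of_int_mult of_int_sum sum.cong)
  qed
next
  assume h: "\<forall>\<rho>. 0 \<le> pairing u (v \<rho>)"
  show "u \<in> dual_cone_M v" unfolding dual_cone_M_def
  proof (rule CollectI, rule ballI)
    fix x assume "x \<in> sigma v"
    then obtain c where c0: "\<forall>\<rho>. 0 \<le> c \<rho>" and x: "x = (\<lambda>i. \<Sum>\<rho>\<in>UNIV. c \<rho> * real_of_int (v \<rho> i))"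
      by (auto simp: sigma_def cone_of_def)
    have "(\<Sum>i\<in>UNIV. real_of_int (u i) * x i) = (\<Sum>\<rho>\<in>UNIV. c \<rho> * real_of_int (pairing u (v \<rho>)))"
      unfolding x by (rule pair_cone)
    also have "\<dots> \<ge> 0" using c0 h by (intro sum_nonneg) simp
    finally show "0 \<le> (\<Sum>i\<in>UNIV. real_of_int (u i) * x i)" .
  qed
qed

lemma inj_divmap:
  fixes v :: "'r::finite \<Rightarrow> 'n::finite \<Rightarrow> int"
  assumes fixed_point: "\<forall>w::'n \<Rightarrow> real. (\<forall>x\<in>sigma v. (\<Sum>i\<in>UNIV. w i * x i) = 0) \<longrightarrow> w = 0"
  shows "inj (divmap v)"
proof (rule injI)
  fix a b assume ab: "divmap v a = divmap v b"
  define u where "u = a - b"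
  have du: "divmap v u = 0" using ab by (simp add: u_def divmap_diff)
  hence pu: "pairing u (v \<rho>) = 0" for \<rho> by (simp add: divmap_def fun_eq_iff)
  have "(\<lambda>i. real_of_int (u i)) = 0"
  proof (rule fixed_point[rule_format])
    fix x assume "x \<in> sigma v"
    then obtain c where x: "x = (\<lambda>i. \<Sum>\<rho>\<in>UNIV. c \<rho> * real_of_int (v \<rho> i))"
      by (auto simp: sigma_def cone_of_def)
    show "(\<Sum>i\<in>UNIV. real_of_int (u i) * x i) = 0"
      unfolding x pair_cone by (simp add: pu)
  qed
  hence "u = 0" by (simp add: fun_eq_iff)
  thus "a = b" by (simp add: u_def)
qed

lemma zspan_smult: "x \<in> zspan S \<Longrightarrow> zsmult k x \<in> zspan S"
proof -
  assume x: "x \<in> zspan S"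
  have nat: "zsmult (int m) x \<in> zspan S" for m
  proof (induct m)
    case 0
    have "zsmult (int 0) x = 0" by (simp add: zsmult_def zero_prod_def zero_fun_def)
    thus ?case by (simp add: zspan_zero)
  next
    case (Suc m)
    have "zsmult (int (Suc m)) x = zsmult (int m) x + x"
      by (cases x) (simp add: zsmult_def algebra_simps plus_fun_def)
    thus ?case using Suc x by (simp add: zspan_add)
  qed
  show ?thesis
  proof (cases "k \<ge> 0")
    case True thus ?thesis using nat[of "nat k"] by simp
  next
    case False
    have "zsmult k x = - zsmult (int (nat (- k))) x"
      using False by (simp add: zsmult_def fun_eq_iff)
    thus ?thesis using nat zspan_neg by metis
  qed
qed

lemma zspan_sum: "finite A \<Longrightarrow> (\<forall>a\<in>A. f a \<in> zspan S) \<Longrightarrow> sum f A \<in> zspan S"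
  by (induct A rule: finite_induct) (auto intro: zspan_zero zspan_add)

lemma nspan_sub_zspan: "x \<in> nspan S \<Longrightarrow> x \<in> zspan S"
  by (induct rule: nspan.induct) (auto intro: zspan.intros)

lemma fst_zsmult: "fst (zsmult k x) = (\<lambda>i. k * fst x i)" by (simp add: zsmult_def)
lemma snd_zsmult: "snd (zsmult k x) = (\<lambda>i. k * snd x i)" by (simp add: zsmult_def)



lemma chi_sum: "j \<le> r \<Longrightarrow> (\<Sum>k\<le>r. chi j k * (X k::int)) = X j"
proof -
  assume j: "j \<le> r"
  have "(\<Sum>k\<le>r. chi j k * X k) = (\<Sum>k\<le>r. if k = j then X k else 0)"
    by (rule sum.cong) (auto simp: chi_def)
  thus ?thesis using j by simp
qed

lemma chi_diff_sum: "i \<le> r \<Longrightarrow> j \<le> r \<Longrightarrow> (\<Sum>k\<le>r. (chi j k - chi i k) * (X k::int)) = X j - X i"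
  by (simp add: left_diff_distrib sum_subtractf chi_sum)

lemma Wt_zero: "0 \<in> Wt r" by (simp add: Wt_def)
lemma Wt_add: "a \<in> Wt r \<Longrightarrow> b \<in> Wt r \<Longrightarrow> a + b \<in> Wt r"
  by (simp add: Wt_def sum.distrib)
lemma Wt_neg: "a \<in> Wt r \<Longrightarrow> - a \<in> Wt r"
  by (simp add: Wt_def sum_negf)
lemma Wt_chi: "i \<le> r \<Longrightarrow> j \<le> r \<Longrightarrow> chi j - chi i \<in> Wt r"
  using chi_diff_sum[of i r j "\<lambda>_. 1"] by (auto simp: Wt_def chi_def)

definition Lf :: "nat \<Rightarrow> (nat \<Rightarrow> 'r \<Rightarrow> int) \<Rightarrow> (nat \<Rightarrow> int) \<Rightarrow> 'r \<Rightarrow> int" where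
  "Lf r Dp \<theta> = (\<lambda>\<rho>. \<Sum>k\<le>r. \<theta> k * Dp k \<rho>)"

lemma Lf_add: "Lf r Dp (a + b) = Lf r Dp a + Lf r Dp b"
  by (simp add: Lf_def fun_eq_iff distrib_right sum.distrib)
lemma Lf_neg: "Lf r Dp (- a) = - Lf r Dp a"
  by (simp add: Lf_def fun_eq_iff sum_negf)
lemma Lf_zero: "Lf r Dp 0 = 0"
  by (simp add: Lf_def fun_eq_iff)
lemma Lf_chi: "i \<le> r \<Longrightarrow> j \<le> r \<Longrightarrow> Lf r Dp (chi j - chi i) = Dp j - Dp i"
  by (simp add: Lf_def fun_eq_iff chi_diff_sum[where X = "\<lambda>k. Dp k _"])

lemma arrowsE:
  assumes "x \<in> piQ ` arrows v r Dp"
  obtains i j D where "x = (chi j - chi i, D)" "i \<le> r" "j \<le> r" "sec v Dp i j D"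
  using assms by (auto simp: arrows_def piQ_def irred_def)

lemma zq_lin:
  "z \<in> ZQ v r Dp \<Longrightarrow> snd z - Lf r Dp (fst z) \<in> range (divmap v) \<and> fst z \<in> Wt r"
  unfolding ZQ_def
proof (induct rule: zspan.induct)
  case zspan_zero
  have "(0::'a \<Rightarrow> int) = divmap v 0" by (simp add: divmap_zero)
  hence "(0::'a \<Rightarrow> int) \<in> range (divmap v)" by (metis rangeI)
  moreover have "snd (0::(nat\<Rightarrow>int)\<times>('a\<Rightarrow>int)) - Lf r Dp (fst 0) = 0"
    by (simp only: fst_zero snd_zero Lf_zero diff_zero)
  moreover have "fst (0::(nat\<Rightarrow>int)\<times>('a\<Rightarrow>int)) \<in> Wt r" by (simp only: fst_zero Wt_zero)
  ultimately show ?case by metis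
next
  case (zspan_gen x)
  then obtain i j D where x: "x = (chi j - chi i, D)" "i \<le> r" "j \<le> r" "sec v Dp i j D"
    by (rule arrowsE)
  hence "deg v D = deg v (Dp j - Dp i)" by (simp add: sec_def)
  hence "D - (Dp j - Dp i) \<in> range (divmap v)" by (simp only: deg_eq)
  moreover have "Lf r Dp (chi j - chi i) = Dp j - Dp i" using x by (simp add: Lf_chi)
  moreover have "chi j - chi i \<in> Wt r" using x by (simp add: Wt_chi)
  ultimately show ?case unfolding x(1) fst_conv snd_conv by metis
next
  case (zspan_add x y)
  have "snd (x + y) - Lf r Dp (fst (x + y)) = (snd x - Lf r Dp (fst x)) + (snd y - Lf r Dp (fst y))"
    by (simp add: Lf_add)
  thus ?case using zspan_add range_divmap_add Wt_add by (metis fst_add)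
next
  case (zspan_neg x)
  have "snd (- x) - Lf r Dp (fst (- x)) = - (snd x - Lf r Dp (fst x))"
    by (simp add: Lf_neg)
  thus ?case using zspan_neg range_divmap_uminus Wt_neg by (metis fst_uminus)
qed

lemma nq_eff: "z \<in> NQ v r Dp \<Longrightarrow> \<forall>\<rho>. 0 \<le> snd z \<rho>"
  unfolding NQ_def
proof (induct rule: nspan.induct)
  case (nspan_gen x)
  then obtain i j D where x: "x = (chi j - chi i, D)" "i \<le> r" "j \<le> r" "sec v Dp i j D"
    by (rule arrowsE)
  thus ?case by (simp add: sec_def)
qed auto

lemma sum_pos: "\<forall>\<rho>. 0 \<le> (E::'r::finite \<Rightarrow> int) \<rho> \<Longrightarrow> E \<noteq> 0 \<Longrightarrow> sum E UNIV > 0"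
proof -
  assume e: "\<forall>\<rho>. 0 \<le> E \<rho>" "E \<noteq> 0"
  then obtain \<rho> where "E \<rho> \<noteq> 0" by (auto simp: fun_eq_iff)
  hence "E \<rho> > 0" using e by (simp add: order_less_le)
  moreover have "E \<rho> \<le> sum E UNIV" by (rule member_le_sum) (auto simp: e)
  ultimately show ?thesis by simp
qed

lemma sec_path:
  fixes v :: "'r::finite \<Rightarrow> 'n::finite \<Rightarrow> int"
  assumes distinct: "\<forall>i\<le>r. \<forall>j\<le>r. i \<noteq> j \<longrightarrow> deg v (Dp i) \<noteq> deg v (Dp j)"
  shows "i \<le> r \<Longrightarrow> j \<le> r \<Longrightarrow> sec v Dp i j D \<Longrightarrow> (chi j - chi i, D) \<in> NQ v r Dp"
proof (induction "nat (sum D UNIV)" arbitrary: i j D rule: less_induct)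
  case less
  show ?case
  proof (cases "irred v r Dp i j D")
    case True
    hence "(i,j,D) \<in> arrows v r Dp" using less.prems by (simp add: arrows_def)
    hence "piQ (i,j,D) \<in> piQ ` arrows v r Dp" by (rule imageI)
    moreover have "piQ (i,j,D) = (chi j - chi i, D)" by (simp add: piQ_def)
    ultimately show ?thesis unfolding NQ_def by (metis nspan_gen)
  next
    case False
    then obtain k D1 D2 where k: "k \<le> r" "k \<noteq> i" "k \<noteq> j" and s1: "sec v Dp i k D1"
      and s2: "sec v Dp k j D2" and D: "D = D1 + D2"
      using less.prems unfolding irred_def by blast
    have nz: "E \<noteq> 0" if "sec v Dp a b E" "a \<le> r" "b \<le> r" "a \<noteq> b" for a b E
    proof
      assume "E = 0"
      hence "deg v (Dp b - Dp a) = deg v 0" using that by (simp add: sec_def)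
      hence "(Dp b - Dp a) - 0 \<in> range (divmap v)" by (simp only: deg_eq)
      hence "deg v (Dp b) = deg v (Dp a)" by (simp add: deg_eq)
      with distinct that show False by metis
    qed
    have p1: "sum D1 UNIV > 0" using sum_pos[of D1] nz[OF s1] s1 k less.prems by (auto simp: sec_def)
    have p2: "sum D2 UNIV > 0" using sum_pos[of D2] nz[OF s2] s2 k less.prems by (auto simp: sec_def)
    have sD: "sum D UNIV = sum D1 UNIV + sum D2 UNIV" by (simp add: D sum.distrib)
    have n1: "(chi k - chi i, D1) \<in> NQ v r Dp"
      by (rule less.hyps[OF _ less.prems(1) k(1) s1]) (use p1 p2 sD in simp)
    have n2: "(chi j - chi k, D2) \<in> NQ v r Dp"
      by (rule less.hyps[OF _ k(1) less.prems(2) s2]) (use p1 p2 sD in simp)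
    have "(chi j - chi i, D) = (chi k - chi i, D1) + (chi j - chi k, D2)" by (simp add: D)
    thus ?thesis using n1 n2 unfolding NQ_def by (metis nspan_add)
  qed
qed

lemma exists_eff:
  fixes v :: "'r::finite \<Rightarrow> 'n::finite \<Rightarrow> int"
  assumes u0: "\<forall>\<rho>. pairing u0 (v \<rho>) > 0"
  shows "\<exists>u. \<forall>\<rho>. 0 \<le> D \<rho> + divmap v u \<rho>"
proof -
  define N where "N = (\<Sum>\<rho>\<in>UNIV. \<bar>D \<rho>\<bar>)"
  have N0: "N \<ge> 0" by (simp add: N_def sum_nonneg)
  have "0 \<le> D \<rho> + divmap v (\<lambda>i. N * u0 i) \<rho>" for \<rho>
  proof -
    have "\<bar>D \<rho>\<bar> \<le> N" unfolding N_def by (rule member_le_sum) auto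
    moreover have "N * 1 \<le> N * pairing u0 (v \<rho>)"
      using u0 N0 by (intro mult_left_mono) (auto simp: int_one_le_iff_zero_less)
    ultimately show ?thesis by (simp add: divmap_smult divmap_def)
  qed
  thus ?thesis by blast
qed



lemma dep:
  fixes f :: "'i \<Rightarrow> 'k \<Rightarrow> int"
  assumes "finite K"
  shows "finite I \<Longrightarrow> card K < card I \<Longrightarrow> (\<forall>i\<in>I. \<forall>k. k \<notin> K \<longrightarrow> f i k = 0) \<Longrightarrow>
         \<exists>c. (\<forall>k. (\<Sum>i\<in>I. c i * f i k) = 0) \<and> (\<exists>i\<in>I. c i \<noteq> 0)"
  using assms
proof (induct K arbitrary: I f rule: finite_induct)
  case empty
  then obtain i0 where "i0 \<in> I" by fastforce
  moreover have "\<forall>k. (\<Sum>i\<in>I. 1 * f i k) = 0" using empty by simp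
  ultimately show ?case by (intro exI[of _ "\<lambda>_. 1"]) auto
next
  case (insert k0 K)
  show ?case
  proof (cases "\<forall>i\<in>I. f i k0 = 0")
    case True
    show ?thesis
    proof (rule insert.hyps(3)[OF insert.prems(1)])
      show "card K < card I" using insert by simp
      show "\<forall>i\<in>I. \<forall>k. k \<notin> K \<longrightarrow> f i k = 0" using True insert.prems(3) by (metis insertE)
    qed
  next
    case False
    then obtain i0 where i0: "i0 \<in> I" "f i0 k0 \<noteq> 0" by blast
    define a where "a = f i0 k0"
    define I' where "I' = I - {i0}"
    define g where "g i m = a * f i m - f i k0 * f i0 m" for i m
    have cI': "card I' = card I - 1" using i0 insert.prems by (simp add: I'_def)
    obtain c' where c': "\<forall>m. (\<Sum>i\<in>I'. c' i * g i m) = 0" and c'n: "\<exists>i\<in>I'. c' i \<noteq> 0"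
    proof -
      have "\<exists>c. (\<forall>k. (\<Sum>i\<in>I'. c i * g i k) = 0) \<and> (\<exists>i\<in>I'. c i \<noteq> 0)"
      proof (rule insert.hyps(3))
        show "finite I'" using insert.prems by (simp add: I'_def)
        show "card K < card I'" using cI' insert by simp
        show "\<forall>i\<in>I'. \<forall>k. k \<notin> K \<longrightarrow> g i k = 0"
        proof (intro ballI allI impI)
          fix i k assume "i \<in> I'" "k \<notin> K"
          show "g i k = 0"
          proof (cases "k = k0")
            case True thus ?thesis by (simp add: g_def a_def)
          next
            case False
            hence "f i k = 0" "f i0 k = 0" using insert.prems(3) \<open>k \<notin> K\<close> \<open>i \<in> I'\<close> i0
              by (auto simp: I'_def)
            thus ?thesis by (simp add: g_def)
          qed
        qed
      qed
      thus ?thesis using that by blast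
    qed
    define c where "c i = (if i = i0 then - (\<Sum>j\<in>I'. c' j * f j k0) else c' i * a)" for i
    have "(\<Sum>i\<in>I. c i * f i m) = 0" for m
    proof -
      have "(\<Sum>i\<in>I. c i * f i m) = c i0 * f i0 m + (\<Sum>i\<in>I'. c i * f i m)"
        using i0 insert.prems(1) by (simp add: I'_def sum.remove)
      also have "(\<Sum>i\<in>I'. c i * f i m) = (\<Sum>i\<in>I'. c' i * a * f i m)"
        by (rule sum.cong) (auto simp: c_def I'_def)
      also have "c i0 * f i0 m = - (\<Sum>j\<in>I'. c' j * f j k0 * f i0 m)"
        by (simp add: c_def sum_distrib_right)
      finally have "(\<Sum>i\<in>I. c i * f i m) = (\<Sum>i\<in>I'. c' i * a * f i m - c' i * f i k0 * f i0 m)"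
        by (simp add: sum_subtractf)
      also have "\<dots> = (\<Sum>i\<in>I'. c' i * g i m)"
        by (rule sum.cong) (auto simp: g_def algebra_simps)
      finally show ?thesis using c' by simp
    qed
    moreover obtain i1 where "i1 \<in> I'" "c' i1 \<noteq> 0" using c'n by blast
    hence "i1 \<in> I" "c i1 \<noteq> 0" using i0 by (auto simp: c_def I'_def a_def)
    ultimately show ?thesis by blast
  qed
qed



lemma rank_upper:
  fixes v :: "'r::finite \<Rightarrow> 'n::finite \<Rightarrow> int"
  assumes injd: "inj (divmap v)" and S: "S \<subseteq> ZQ v r Dp" and ind: "zindep S"
  shows "card S \<le> card (UNIV::'n set) + r"
proof (rule ccontr)
  assume "\<not> ?thesis"
  hence big: "card S > card (UNIV::'n set) + r" by simp
  have finS: "finite S" using ind by (simp add: zindep_def)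
  define K :: "(nat + 'n) set" where "K = Inl ` {1..r} \<union> Inr ` UNIV"
  have finK: "finite K" by (simp add: K_def)
  have cK: "card K = r + card (UNIV::'n set)" unfolding K_def
    by (subst card_Un_disjoint) (auto simp: card_image)
  have exU: "\<exists>!u. divmap v u = snd z - Lf r Dp (fst z)" if zin: "z \<in> ZQ v r Dp" for z
  proof -
    obtain u where "snd z - Lf r Dp (fst z) = divmap v u" using zq_lin[OF zin] by auto
    thus ?thesis using injd by (metis injD)
  qed
  define U where "U z = (THE u. divmap v u = snd z - Lf r Dp (fst z))" for z
  have U: "divmap v (U z) = snd z - Lf r Dp (fst z)" if "z \<in> ZQ v r Dp" for z
    unfolding U_def using theI'[OF exU[OF that]] .
  define f where "f s m = (case m of Inl k \<Rightarrow> if k \<in> {1..r} then fst s k else 0 | Inr i \<Rightarrow> U s i)" for s m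
  have supp: "\<forall>s\<in>S. \<forall>m. m \<notin> K \<longrightarrow> f s m = 0" by (auto simp: f_def K_def split: sum.split)
  obtain c where c: "\<forall>m. (\<Sum>s\<in>S. c s * f s m) = 0" and cn: "\<exists>s\<in>S. c s \<noteq> 0"
    using dep[OF finK finS _ supp] cK big by auto
  define z where "z = (\<Sum>s\<in>S. zsmult (c s) s)"
  have zZ: "z \<in> ZQ v r Dp" unfolding z_def ZQ_def
    using S finS by (intro zspan_sum ballI zspan_smult) (auto simp: ZQ_def)
  have fz: "fst z k = (\<Sum>s\<in>S. c s * fst s k)" for k by (simp add: z_def fst_sum sum_fun_app fst_zsmult)
  have sz: "snd z \<rho> = (\<Sum>s\<in>S. c s * snd s \<rho>)" for \<rho> by (simp add: z_def snd_sum sum_fun_app snd_zsmult)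
  have fz1: "fst z k = 0" if "k \<ge> 1" for k
  proof (cases "k \<le> r")
    case True
    have "fst z k = (\<Sum>s\<in>S. c s * f s (Inl k))" using True that by (simp add: fz f_def)
    thus ?thesis using c by simp
  next
    case False
    have "fst s k = 0" if "s \<in> S" for s using zq_lin[of s v r Dp] S that False by (auto simp: Wt_def)
    thus ?thesis by (simp add: fz)
  qed
  have fz0: "fst z 0 = 0"
  proof -
    have "fst z \<in> Wt r" using zq_lin[OF zZ] by simp
    hence "(\<Sum>k\<le>r. fst z k) = 0" by (simp add: Wt_def)
    moreover have "(\<Sum>k\<le>r. fst z k) = fst z 0 + (\<Sum>k\<in>{1..r}. fst z k)"
      by (simp add: atMost_atLeast0 sum.atLeast_Suc_atMost)
    moreover have "(\<Sum>k\<in>{1..r}. fst z k) = 0" using fz1 by simp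
    ultimately show ?thesis by simp
  qed
  have fz_0: "fst z = 0"
  proof
    fix k show "fst z k = 0 k" using fz0 fz1[of k] by (cases k) auto
  qed
  have "snd z = 0"
  proof
    fix \<rho>
    have "(\<lambda>i. \<Sum>s\<in>S. c s * U s i) = 0"
    proof
      fix i show "(\<Sum>s\<in>S. c s * U s i) = 0 i" using c[rule_format, of "Inr i"] by (simp add: f_def)
    qed
    hence "divmap v (\<lambda>i. \<Sum>s\<in>S. c s * U s i) \<rho> = 0" by (simp add: divmap_zero)
    moreover have "divmap v (\<lambda>i. \<Sum>s\<in>S. c s * U s i) \<rho> = (\<Sum>s\<in>S. c s * divmap v (U s) \<rho>)"
      by (simp add: divmap_def pairing_def sum_distrib_right sum_distrib_left sum.swap[of _ S] mult_ac)
    moreover have "(\<Sum>s\<in>S. c s * divmap v (U s) \<rho>) = (\<Sum>s\<in>S. c s * snd s \<rho> - c s * Lf r Dp (fst s) \<rho>)"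
      by (rule sum.cong) (use U S in \<open>auto simp: right_diff_distrib\<close>)
    moreover have "(\<Sum>s\<in>S. c s * Lf r Dp (fst s) \<rho>) = Lf r Dp (fst z) \<rho>"
      by (simp add: Lf_def fz sum_distrib_left sum_distrib_right sum.swap[of _ S] mult_ac)
    moreover have "Lf r Dp (fst z) \<rho> = 0" using fz_0 by (simp add: Lf_def)
    ultimately show "snd z \<rho> = 0 \<rho>" using sz by (simp add: sum_subtractf)
  qed
  hence "z = 0" using fz_0 by (simp add: prod_eq_iff)
  hence "\<forall>s\<in>S. c s = 0" using ind by (simp add: zindep_def z_def)
  with cn show False by blast
qed



lemma rank_lower:
  fixes v :: "'r::finite \<Rightarrow> 'n::finite \<Rightarrow> int"
  assumes injd: "inj (divmap v)" and E: "\<forall>k\<le>r. (chi k - chi 0, E k) \<in> ZQ v r Dp"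
    and c1: "\<forall>u. (0, divmap v u) \<in> ZQ v r Dp"
  shows "\<exists>S. S \<subseteq> ZQ v r Dp \<and> zindep S \<and> card S = card (UNIV::'n set) + r"
proof -
  define w where "w k = (chi k - chi 0, E k)" for k
  define e :: "'n \<Rightarrow> 'n \<Rightarrow> int" where "e i = (\<lambda>j. if j = i then 1 else 0)" for i
  define b where "b i = ((0::nat \<Rightarrow> int), divmap v (e i))" for i
  define A where "A = w ` {1..r}"
  define B where "B = range b"
  have de: "divmap v (e i) \<rho> = v \<rho> i" for i \<rho>
  proof -
    have "divmap v (e i) \<rho> = (\<Sum>j\<in>UNIV. if j = i then v \<rho> j else 0)"
      unfolding divmap_def pairing_def by (rule sum.cong) (auto simp: e_def)
    thus ?thesis by simp
  qed
  have fw: "fst (w k) m = chi k m - chi 0 m" for k m by (simp add: w_def)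
  have injw: "inj_on w {1..r}"
  proof
    fix k k' assume kk: "k \<in> {1..r}" "k' \<in> {1..r}" "w k = w k'"
    hence "fst (w k) k = fst (w k') k" by simp
    hence h: "chi k k - chi 0 k = chi k' k - chi 0 k" by (simp only: fw)
    have "k \<noteq> 0" using kk by simp
    with h show "k = k'" by (simp add: chi_def split: if_splits)
  qed
  have injb: "inj b"
  proof
    fix i j assume "b i = b j"
    hence "divmap v (e i) = divmap v (e j)" by (simp add: b_def)
    hence "e i = e j" using injd by (simp add: inj_eq)
    hence "e i i = e j i" by simp
    thus "i = j" by (auto simp: e_def split: if_splits)
  qed
  have disj: "A \<inter> B = {}"
  proof (rule ccontr)
    assume "A \<inter> B \<noteq> {}"
    then obtain k i where k: "k \<in> {1..r}" and wb: "w k = b i" unfolding A_def B_def by blast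
    hence "fst (w k) k = fst (b i) k" by simp
    thus False using k by (simp add: fw b_def chi_def)
  qed
  define S where "S = A \<union> B"
  have finS: "finite S" by (simp add: S_def A_def B_def)
  have cardS: "card S = card (UNIV::'n set) + r"
  proof -
    have "card A = r" unfolding A_def using card_image[OF injw] by simp
    moreover have "card B = card (UNIV::'n set)" unfolding B_def using card_image[OF injb] by simp
    moreover have "finite A" "finite B" by (auto simp: A_def B_def)
    ultimately show ?thesis unfolding S_def using disj by (simp add: card_Un_disjoint)
  qed
  have SZ: "S \<subseteq> ZQ v r Dp" using E c1 by (auto simp: S_def A_def B_def w_def b_def)
  have "zindep S"
    unfolding zindep_def
  proof (intro conjI finS allI impI ballI)
    fix c s assume sum0: "(\<Sum>s\<in>S. zsmult (c s) s) = 0" and s: "s \<in> S"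
    have split: "(\<Sum>s\<in>S. g s) = (\<Sum>k\<in>{1..r}. g (w k)) + (\<Sum>i\<in>UNIV. g (b i))" for g :: "_ \<Rightarrow> int"
    proof -
      have "finite A" "finite B" by (auto simp: A_def B_def)
      hence "(\<Sum>s\<in>S. g s) = sum g A + sum g B" unfolding S_def using disj by (simp add: sum.union_disjoint)
      moreover have "sum g A = (\<Sum>k\<in>{1..r}. g (w k))" unfolding A_def using sum.reindex[OF injw, of g] by simp
      moreover have "sum g B = (\<Sum>i\<in>UNIV. g (b i))" unfolding B_def using sum.reindex[OF injb, of g] by simp
      ultimately show ?thesis by simp
    qed
    have cw: "c (w m) = 0" if m: "m \<in> {1..r}" for m
    proof -
      have "(\<Sum>s\<in>S. c s * fst s m) = 0"
        using arg_cong[OF sum0, of "\<lambda>x. fst x m"] by (simp add: fst_sum sum_fun_app fst_zsmult)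
      hence "(\<Sum>k\<in>{1..r}. c (w k) * fst (w k) m) + (\<Sum>i\<in>UNIV. c (b i) * fst (b i) m) = 0"
        by (simp only: split)
      moreover have "(\<Sum>i\<in>UNIV. c (b i) * fst (b i) m) = 0" by (simp add: b_def)
      moreover have "(\<Sum>k\<in>{1..r}. c (w k) * fst (w k) m) = (\<Sum>k\<in>{1..r}. if k = m then c (w m) else 0)"
        by (rule sum.cong) (use m in \<open>auto simp: fw chi_def\<close>)
      ultimately show ?thesis using m by simp
    qed
    have cb: "c (b i) = 0" for i
    proof -
      have "divmap v (\<lambda>i. c (b i)) = divmap v 0"
      proof
        fix \<rho>
        have "(\<Sum>s\<in>S. c s * snd s \<rho>) = 0"
          using arg_cong[OF sum0, of "\<lambda>x. snd x \<rho>"] by (simp add: snd_sum sum_fun_app snd_zsmult)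
        hence "(\<Sum>k\<in>{1..r}. c (w k) * snd (w k) \<rho>) + (\<Sum>i\<in>UNIV. c (b i) * snd (b i) \<rho>) = 0"
          by (simp only: split)
        moreover have "(\<Sum>k\<in>{1..r}. c (w k) * snd (w k) \<rho>) = 0" using cw by simp
        moreover have "(\<Sum>i\<in>UNIV. c (b i) * snd (b i) \<rho>) = (\<Sum>i\<in>UNIV. c (b i) * v \<rho> i)"
          by (rule sum.cong) (simp_all only: b_def snd_conv de)
        moreover have "divmap v (\<lambda>i. c (b i)) \<rho> = (\<Sum>i\<in>UNIV. c (b i) * v \<rho> i)"
          by (simp only: divmap_def pairing_def)
        ultimately show "divmap v (\<lambda>i. c (b i)) \<rho> = divmap v 0 \<rho>" by (simp add: divmap_zero)
      qed
      hence "(\<lambda>i. c (b i)) = 0" using injd by (simp add: inj_eq)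
      thus ?thesis by (simp add: fun_eq_iff)
    qed
    show "c s = 0" using s cw cb by (auto simp: S_def A_def B_def)
  qed
  thus ?thesis using SZ cardS by blast
qed



theorem lemma2p8:
  fixes v :: "'r::finite \<Rightarrow> 'n::finite \<Rightarrow> int"
    and r :: nat
    and Dp :: "nat \<Rightarrow> 'r \<Rightarrow> int"
  assumes prim: "\<forall>\<rho>. primitive (v \<rho>)"
    and rays: "\<forall>\<rho>. (\<lambda>i. real_of_int (v \<rho> i)) \<notin> cone_of v (UNIV - {\<rho>})"
    and strongly_convex: "\<forall>x\<in>sigma v. - x \<in> sigma v \<longrightarrow> x = 0"
    and fixed_point: "\<forall>w::'n \<Rightarrow> real. (\<forall>x\<in>sigma v. (\<Sum>i\<in>UNIV. w i * x i) = 0) \<longrightarrow> w = 0"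
    and E0: "deg v (Dp 0) = deg v 0"
    and distinct: "\<forall>i\<le>r. \<forall>j\<le>r. i \<noteq> j \<longrightarrow> deg v (Dp i) \<noteq> deg v (Dp j)"
  shows
    "(\<forall>u. (0, divmap v u) \<in> ZQ v r Dp)
     \<and> inj (\<lambda>u. (0::nat \<Rightarrow> int, divmap v u))
     \<and> {z \<in> ZQ v r Dp. fst z = 0} = range (\<lambda>u. (0, divmap v u))
     \<and> fst ` ZQ v r Dp = Wt r
     \<and> bij_betw snd {z \<in> ZQ v r Dp. fst z = 0} (range (divmap v))
     \<and> (\<forall>z\<in>ZQ v r Dp. deg v (snd z) = nu v r Dp (fst z))
     \<and> inj (divmap v)
     \<and> {D. deg v D = deg v 0} = range (divmap v)
     \<and> range (deg v) = Cl v
     \<and> bij_betw snd {z \<in> NQ v r Dp. fst z = 0} (divmap v ` dual_cone_M v)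
     \<and> divmap v ` dual_cone_M v = {D. (\<forall>\<rho>. 0 \<le> D \<rho>) \<and> deg v D = deg v 0}
     \<and> zrank (ZQ v r Dp) = card (UNIV :: 'n set) + r"
proof -
  obtain u0 where u0: "\<forall>\<rho>. pairing u0 (v \<rho>) > 0" using interior_point[OF rays strongly_convex] by blast
  have injd: "inj (divmap v)" by (rule inj_divmap[OF fixed_point])
  have sp: "\<And>i j D. i \<le> r \<Longrightarrow> j \<le> r \<Longrightarrow> sec v Dp i j D \<Longrightarrow> (chi j - chi i, D) \<in> NQ v r Dp"
    by (rule sec_path[OF distinct])
  have NZ: "\<And>z. z \<in> NQ v r Dp \<Longrightarrow> z \<in> ZQ v r Dp" unfolding NQ_def ZQ_def by (rule nspan_sub_zspan)
  have deg0: "deg v D = deg v 0 \<longleftrightarrow> D \<in> range (divmap v)" for D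
    by (simp only: deg_eq diff_zero)
  have dualI: "(0, divmap v u) \<in> NQ v r Dp" if u: "u \<in> dual_cone_M v" for u
  proof -
    have eff: "\<forall>\<rho>. 0 \<le> divmap v u \<rho>" using u by (simp add: dual_iff divmap_def)
    have "Dp 0 - Dp 0 = 0" by simp
    hence "deg v (divmap v u) = deg v (Dp 0 - Dp 0)" using deg0 by simp
    hence "sec v Dp 0 0 (divmap v u)" using eff by (simp add: sec_def)
    from sp[OF _ _ this] show ?thesis by simp
  qed
  have c1: "(0, divmap v u) \<in> ZQ v r Dp" for u
  proof -
    define N where "N = (\<Sum>\<rho>\<in>UNIV. \<bar>pairing u (v \<rho>)\<bar>)"
    have N0: "N \<ge> 0" by (simp add: N_def sum_nonneg)
    define b where "b = (\<lambda>i. N * u0 i)"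
    define a where "a = u + b"
    have pb: "pairing b (v \<rho>) \<ge> N" for \<rho>
    proof -
      have "N * 1 \<le> N * pairing u0 (v \<rho>)"
        using u0 N0 by (intro mult_left_mono) (auto simp: int_one_le_iff_zero_less)
      thus ?thesis by (simp add: b_def pairing_smult)
    qed
    have "\<bar>pairing u (v \<rho>)\<bar> \<le> N" for \<rho> unfolding N_def by (rule member_le_sum) auto
    hence pa: "pairing a (v \<rho>) \<ge> 0" for \<rho> using pb[of \<rho>] by (simp add: a_def pairing_add) (smt (verit))
    have pb0: "pairing b (v \<rho>) \<ge> 0" for \<rho> using pb[of \<rho>] N0 by simp
    have "(0, divmap v a) \<in> ZQ v r Dp" using dualI[of a] pa NZ by (simp add: dual_iff)
    moreover have "(0, divmap v b) \<in> ZQ v r Dp" using dualI[of b] pb0 NZ by (simp add: dual_iff)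
    ultimately have "(0, divmap v a) + - (0, divmap v b) \<in> ZQ v r Dp"
      unfolding ZQ_def by (intro zspan_add zspan_neg)
    moreover have "(0, divmap v a) + - (0, divmap v b) = ((0::nat\<Rightarrow>int), divmap v u)"
      using divmap_diff[of v a b] by (simp add: a_def)
    ultimately show ?thesis by simp
  qed
  have c3: "{z \<in> ZQ v r Dp. fst z = 0} = range (\<lambda>u. (0, divmap v u))"
  proof
    show "{z \<in> ZQ v r Dp. fst z = 0} \<subseteq> range (\<lambda>u. (0, divmap v u))"
    proof
      fix z assume "z \<in> {z \<in> ZQ v r Dp. fst z = 0}"
      hence z: "z \<in> ZQ v r Dp" "fst z = 0" by auto
      have "snd z - Lf r Dp (fst z) \<in> range (divmap v)" using zq_lin[OF z(1)] by simp
      hence "snd z \<in> range (divmap v)" using z(2) by (simp add: Lf_zero)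
      then obtain w where "snd z = divmap v w" by auto
      hence "z = (0, divmap v w)" using z(2) by (simp add: prod_eq_iff)
      thus "z \<in> range (\<lambda>u. (0, divmap v u))" by simp
    qed
    show "range (\<lambda>u. (0, divmap v u)) \<subseteq> {z \<in> ZQ v r Dp. fst z = 0}" using c1 by auto
  qed
  have Ek: "\<exists>E. (chi k - chi 0, E) \<in> ZQ v r Dp" if k: "k \<le> r" for k
  proof -
    obtain u where u: "\<forall>\<rho>. 0 \<le> (Dp k - Dp 0) \<rho> + divmap v u \<rho>"
      using exists_eff[OF u0] by blast
    have "(Dp k - Dp 0 + divmap v u) - (Dp k - Dp 0) \<in> range (divmap v)" by simp
    hence "deg v (Dp k - Dp 0 + divmap v u) = deg v (Dp k - Dp 0)" by (simp only: deg_eq)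
    hence "sec v Dp 0 k (Dp k - Dp 0 + divmap v u)" using u by (simp add: sec_def)
    from NZ[OF sp[OF _ k this]] show ?thesis by blast
  qed
  then obtain E where E: "\<forall>k\<le>r. (chi k - chi 0, E k) \<in> ZQ v r Dp" by metis
  have c4: "fst ` ZQ v r Dp = Wt r"
  proof
    show "fst ` ZQ v r Dp \<subseteq> Wt r" using zq_lin by blast
    show "Wt r \<subseteq> fst ` ZQ v r Dp"
    proof
      fix \<theta> assume th: "\<theta> \<in> Wt r"
      define z where "z = (\<Sum>k\<in>{1..r}. zsmult (\<theta> k) (chi k - chi 0, E k))"
      have zZ: "z \<in> ZQ v r Dp" unfolding z_def
        using E unfolding ZQ_def by (intro zspan_sum ballI zspan_smult) auto
      have "fst z = \<theta>"
      proof
        fix m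
        have fz: "fst z m = (\<Sum>k\<in>{1..r}. \<theta> k * (chi k m - chi 0 m))"
          by (simp add: z_def fst_sum sum_fun_app fst_zsmult)
        show "fst z m = \<theta> m"
        proof (cases "m = 0")
          case True
          have "(\<Sum>k\<in>{1..r}. \<theta> k * (chi k m - chi 0 m)) = (\<Sum>k\<in>{1..r}. - \<theta> k)"
            by (rule sum.cong) (auto simp: True chi_def)
          moreover have "(\<Sum>k\<le>r. \<theta> k) = \<theta> 0 + (\<Sum>k\<in>{1..r}. \<theta> k)"
            by (simp add: atMost_atLeast0 sum.atLeast_Suc_atMost)
          moreover have "(\<Sum>k\<le>r. \<theta> k) = 0" using th by (simp add: Wt_def)
          ultimately show ?thesis using fz True by (simp add: sum_negf)
        next
          case False
          have "(\<Sum>k\<in>{1..r}. \<theta> k * (chi k m - chi 0 m)) = (\<Sum>k\<in>{1..r}. if k = m then \<theta> m else 0)"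
            by (rule sum.cong) (auto simp: False chi_def)
          moreover have "m > r \<Longrightarrow> \<theta> m = 0" using th by (simp add: Wt_def)
          ultimately show ?thesis using fz False by auto
        qed
      qed
      thus "\<theta> \<in> fst ` ZQ v r Dp" using zZ by force
    qed
  qed
  have c5: "bij_betw snd {z \<in> ZQ v r Dp. fst z = 0} (range (divmap v))"
    unfolding bij_betw_def
  proof
    show "inj_on snd {z \<in> ZQ v r Dp. fst z = 0}" by (auto intro: inj_onI simp: prod_eq_iff)
    show "snd ` {z \<in> ZQ v r Dp. fst z = 0} = range (divmap v)" unfolding c3 by (auto simp: image_image)
  qed
  have c6: "\<forall>z\<in>ZQ v r Dp. deg v (snd z) = nu v r Dp (fst z)"
  proof
    fix z assume "z \<in> ZQ v r Dp"
    hence "snd z - Lf r Dp (fst z) \<in> range (divmap v)" using zq_lin by blast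
    hence "deg v (snd z) = deg v (Lf r Dp (fst z))" by (simp only: deg_eq)
    thus "deg v (snd z) = nu v r Dp (fst z)" by (simp add: nu_def Lf_def)
  qed
  have c8: "{D. deg v D = deg v 0} = range (divmap v)" using deg0 by auto
  have c11: "divmap v ` dual_cone_M v = {D. (\<forall>\<rho>. 0 \<le> D \<rho>) \<and> deg v D = deg v 0}"
  proof
    show "divmap v ` dual_cone_M v \<subseteq> {D. (\<forall>\<rho>. 0 \<le> D \<rho>) \<and> deg v D = deg v 0}"
      using deg0 by (auto simp: dual_iff divmap_def)
    show "{D. (\<forall>\<rho>. 0 \<le> D \<rho>) \<and> deg v D = deg v 0} \<subseteq> divmap v ` dual_cone_M v"
    proof
      fix D assume "D \<in> {D. (\<forall>\<rho>. 0 \<le> D \<rho>) \<and> deg v D = deg v 0}"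
      hence D: "\<forall>\<rho>. 0 \<le> D \<rho>" "D \<in> range (divmap v)" using deg0 by auto
      then obtain u where u: "D = divmap v u" by auto
      hence "u \<in> dual_cone_M v" using D(1) by (simp add: dual_iff divmap_def)
      thus "D \<in> divmap v ` dual_cone_M v" using u by simp
    qed
  qed
  have c10: "bij_betw snd {z \<in> NQ v r Dp. fst z = 0} (divmap v ` dual_cone_M v)"
    unfolding bij_betw_def
  proof
    show "inj_on snd {z \<in> NQ v r Dp. fst z = 0}" by (auto intro: inj_onI simp: prod_eq_iff)
    show "snd ` {z \<in> NQ v r Dp. fst z = 0} = divmap v ` dual_cone_M v"
    proof
      show "snd ` {z \<in> NQ v r Dp. fst z = 0} \<subseteq> divmap v ` dual_cone_M v"
      proof
        fix D assume "D \<in> snd ` {z \<in> NQ v r Dp. fst z = 0}"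
        then obtain z where z: "z \<in> NQ v r Dp" "fst z = 0" "D = snd z" by auto
        have "z \<in> {z \<in> ZQ v r Dp. fst z = 0}" using z NZ by auto
        hence "D \<in> range (divmap v)" using z(3) c3 by auto
        moreover have "\<forall>\<rho>. 0 \<le> D \<rho>" using nq_eff[OF z(1)] z(3) by simp
        ultimately show "D \<in> divmap v ` dual_cone_M v" unfolding c11 using deg0 by auto
      qed
      show "divmap v ` dual_cone_M v \<subseteq> snd ` {z \<in> NQ v r Dp. fst z = 0}"
      proof
        fix D assume "D \<in> divmap v ` dual_cone_M v"
        then obtain u where u: "u \<in> dual_cone_M v" "D = divmap v u" by auto
        hence "(0, D) \<in> {z \<in> NQ v r Dp. fst z = 0}" using dualI by auto
        thus "D \<in> snd ` {z \<in> NQ v r Dp. fst z = 0}" by force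
      qed
    qed
  qed
  have c12: "zrank (ZQ v r Dp) = card (UNIV :: 'n set) + r"
  proof -
    obtain S where S: "S \<subseteq> ZQ v r Dp" "zindep S" "card S = card (UNIV::'n set) + r"
      using rank_lower[OF injd E] c1 by blast
    let ?X = "{card S | S. S \<subseteq> ZQ v r Dp \<and> zindep S}"
    have ub: "\<forall>x\<in>?X. x \<le> card (UNIV::'n set) + r" using rank_upper[OF injd] by blast
    have fin: "finite ?X" by (rule finite_subset[of _ "{..card (UNIV::'n set) + r}"]) (use ub in auto)
    have mem: "card (UNIV::'n set) + r \<in> ?X" by (intro CollectI exI[of _ S]) (simp add: S)
    show ?thesis unfolding zrank_def by (rule Max_eqI[OF fin]) (use ub mem in auto)
  qed
  show ?thesis
    using c1 injd c3 c4 c5 c6 c8 c10 c11 c12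
    by (simp add: Cl_def inj_def)
qed


end
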